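(* Let $\Omega\subseteq\mathbb R^N$ be an open bounded set, $K\in L^\infty(\Omega\times B_1)$ with $\lambda\le K\le\Lambda$ on $\Omega\times B_1$ for some $0<\lambda\le\Lambda$, and let $u\in L^1(B_1(\Omega))\cap C^{Dini}_{loc}(\Omega)\cap C(\overline\Omega)$ satisfy $L_Ku\le0$ in $\Omega$ and $u\le0$ on $\mathbb R^N\setminus\Omega$. Then $u\le0$ in $\Omega$.
   Context: $B_1(\Omega):=\bigcup_{x\in\Omega}B_1(x)$. $C^{Dini}_{loc}(\Omega)$: functions that on every closed ball contained in $\Omega$ admit a modulus of continuity $\omega$ with $\int_0^1\omega(\rho)\rho^{-1}d\rho<\infty$. $L_Ku(x):=\int_{B_1(x)}\frac{u(x)-u(y)}{|y-x|^N}K(x,y-x)\,dy$ for $x\in\Omega$. *)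

theory Defs
  imports "HOL-Analysis.Analysis"
begin

definition unit_nbhd :: "'a::euclidean_space set \<Rightarrow> 'a set" where
  "unit_nbhd \<Omega> = (\<Union>x\<in>\<Omega>. ball x 1)"

definition dini_modulus :: "(real \<Rightarrow> real) \<Rightarrow> bool" where
  "dini_modulus \<omega> \<longleftrightarrow>
     \<omega> 0 = 0 \<and> (\<forall>t\<ge>0. 0 \<le> \<omega> t) \<and> mono_on {0..} \<omega> \<and>
     (\<omega> \<longlongrightarrow> 0) (at_right 0) \<and>
     set_integrable lborel {0<..1} (\<lambda>\<rho>. \<omega> \<rho> / \<rho>)"

definition C_Dini_loc :: "'a::euclidean_space set \<Rightarrow> ('a \<Rightarrow> real) \<Rightarrow> bool" where
  "C_Dini_loc \<Omega> u \<longleftrightarrow>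
     (\<forall>c r. cball c r \<subseteq> \<Omega> \<longrightarrow>
        (\<exists>\<omega>. dini_modulus \<omega> \<and>
              (\<forall>x\<in>cball c r. \<forall>y\<in>cball c r. \<bar>u x - u y\<bar> \<le> \<omega> (dist x y))))"

definition L_K :: "('a::euclidean_space \<Rightarrow> 'a \<Rightarrow> real) \<Rightarrow> ('a \<Rightarrow> real) \<Rightarrow> 'a \<Rightarrow> real" where
  "L_K K u x = set_lebesgue_integral lebesgue (ball x 1)
      (\<lambda>y. (u x - u y) / norm (y - x) ^ DIM('a) * K x (y - x))"

end

theory Submission
  imports Defs
begin

lemma dini_sum:
  assumes "dini_modulus \<omega>"
  shows "(\<Sum>k. ennreal (\<omega> ((1/2)^Suc k))) < \<infinity>"
proof -
  have w0: "\<omega> 0 = 0" and nn: "\<And>t. t \<ge> 0 \<Longrightarrow> 0 \<le> \<omega> t" and mo: "mono_on {0..} \<omega>"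
    and si: "set_integrable lborel {0<..1} (\<lambda>\<rho>. \<omega> \<rho> / \<rho>)"
    using assms unfolding dini_modulus_def by auto
  define I where "I k = {(1/2::real)^Suc k<..(1/2)^k}" for k
  define f where "f \<rho> = \<omega> \<rho> / \<rho>" for \<rho>
  have fnn: "\<rho> > 0 \<Longrightarrow> 0 \<le> f \<rho>" for \<rho> using nn[of \<rho>] by (simp add: f_def)
  have int: "integrable lborel (\<lambda>\<rho>. indicator {0<..1} \<rho> * f \<rho>)"
    using si unfolding set_integrable_def f_def by simp
  have fin: "(\<integral>\<^sup>+\<rho>. ennreal (indicator {0<..1} \<rho> * f \<rho>) \<partial>lborel) < \<infinity>"
    using integrableD(2)[OF int] by (simp add: top.not_eq_extremum)
  have meas: "(\<lambda>\<rho>. indicator {0<..1} \<rho> * f \<rho>) \<in> borel_measurable lborel"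
    using int by auto
  have IS: "I k \<subseteq> {0<..1}" for k
  proof -
    have "(1/2::real)^k \<le> 1" by (rule power_le_one) auto
    then show ?thesis by (auto simp: I_def)
  qed
  have disj: "disjoint_family I"
    unfolding disjoint_family_on_def
  proof (intro ballI impI)
    fix i j :: nat assume "i \<noteq> j"
    { fix i j :: nat assume "i < j"
      then have "(1/2::real)^j \<le> (1/2)^Suc i" by (intro power_decreasing) auto
      then have "I i \<inter> I j = {}" by (auto simp: I_def) }
    from this[of i j] this[of j i] \<open>i \<noteq> j\<close> show "I i \<inter> I j = {}"
      by (metis inf_commute nat_neq_iff)
  qed
  have each: "ennreal (\<omega> ((1/2)^Suc k)) \<le> 2 * (\<integral>\<^sup>+\<rho>. ennreal (indicator (I k) \<rho> * f \<rho>) \<partial>lborel)" for k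
  proof -
    define a :: real where "a = (1/2)^k"
    have a: "a > 0" by (simp add: a_def)
    have half: "(1/2::real)^Suc k = a/2" by (simp add: a_def)
    have "(\<integral>\<^sup>+\<rho>. ennreal (\<omega> (a/2) / a) * indicator (I k) \<rho> \<partial>lborel)
        \<le> (\<integral>\<^sup>+\<rho>. ennreal (indicator (I k) \<rho> * f \<rho>) \<partial>lborel)"
    proof (rule nn_integral_mono)
      fix \<rho> show "ennreal (\<omega> (a/2) / a) * indicator (I k) \<rho> \<le> ennreal (indicator (I k) \<rho> * f \<rho>)"
      proof (cases "\<rho> \<in> I k")
        case True
        then have r: "a/2 < \<rho>" "\<rho> \<le> a" by (auto simp: I_def a_def)
        have "\<omega> (a/2) \<le> \<omega> \<rho>" using mo r a by (intro mono_onD[OF mo]) auto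
        moreover have "0 \<le> \<omega> (a/2)" using nn a by simp
        ultimately have "\<omega> (a/2) / a \<le> \<omega> \<rho> / \<rho>"
          using r a by (intro frac_le) auto
        then show ?thesis using True by (simp add: f_def ennreal_leI)
      qed simp
    qed
    also have "(\<integral>\<^sup>+\<rho>. ennreal (\<omega> (a/2) / a) * indicator (I k) \<rho> \<partial>lborel)
        = ennreal (\<omega> (a/2) / a) * ennreal (a - a/2)"
      using a by (subst nn_integral_cmult_indicator) (auto simp: I_def half a_def)
    also have "\<dots> = ennreal (\<omega> (a/2) / 2)"
      using a nn[of "a/2"] by (simp add: ennreal_mult''[symmetric] field_simps)
    finally have "ennreal (\<omega> (a/2) / 2) \<le> (\<integral>\<^sup>+\<rho>. ennreal (indicator (I k) \<rho> * f \<rho>) \<partial>lborel)" .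
    then have "2 * ennreal (\<omega> (a/2) / 2) \<le> 2 * (\<integral>\<^sup>+\<rho>. ennreal (indicator (I k) \<rho> * f \<rho>) \<partial>lborel)"
      by (rule mult_left_mono) auto
    moreover have "2 * ennreal (\<omega> (a/2) / 2) = ennreal (\<omega> (a/2))"
      using nn[of "a/2"] a ennreal_mult[of 2 "\<omega> (a/2) / 2"] by simp
    ultimately show ?thesis by (simp only: half)
  qed
  have "(\<Sum>k. ennreal (\<omega> ((1/2)^Suc k))) \<le> (\<Sum>k. 2 * (\<integral>\<^sup>+\<rho>. ennreal (indicator (I k) \<rho> * f \<rho>) \<partial>lborel))"
    by (intro suminf_le each) auto
  also have "\<dots> = 2 * (\<Sum>k. (\<integral>\<^sup>+\<rho>. ennreal (indicator (I k) \<rho> * f \<rho>) \<partial>lborel))"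
    by simp
  also have "(\<Sum>k. (\<integral>\<^sup>+\<rho>. ennreal (indicator (I k) \<rho> * f \<rho>) \<partial>lborel))
      = (\<integral>\<^sup>+\<rho>. (\<Sum>k. ennreal (indicator (I k) \<rho> * f \<rho>)) \<partial>lborel)"
  proof (rule nn_integral_suminf[symmetric])
    fix k
    have "(\<lambda>\<rho>. indicator (I k) \<rho> * (indicator {0<..1} \<rho> * f \<rho>)) \<in> borel_measurable lborel"
      using meas by (auto simp: I_def)
    moreover have "(\<lambda>\<rho>. indicator (I k) \<rho> * (indicator {0<..1} \<rho> * f \<rho>)) = (\<lambda>\<rho>. indicator (I k) \<rho> * f \<rho>)"
      using IS[of k] by (auto simp: indicator_def fun_eq_iff)
    ultimately show "(\<lambda>\<rho>. ennreal (indicator (I k) \<rho> * f \<rho>)) \<in> borel_measurable lborel" by simp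
  qed
  also have "\<dots> \<le> (\<integral>\<^sup>+\<rho>. ennreal (indicator {0<..1} \<rho> * f \<rho>) \<partial>lborel)"
  proof (rule nn_integral_mono)
    fix \<rho>
    show "(\<Sum>k. ennreal (indicator (I k) \<rho> * f \<rho>)) \<le> ennreal (indicator {0<..1} \<rho> * f \<rho>)"
    proof (cases "\<exists>k. \<rho> \<in> I k")
      case True
      then obtain i where i: "\<rho> \<in> I i" by auto
      then have "\<rho> \<in> {0<..1}" using IS[of i] by blast
      have "(\<Sum>k. ennreal (indicator (I k) \<rho> * f \<rho>)) = (\<Sum>k. ennreal (f \<rho>) * indicator (I k) \<rho>)"
        by (intro suminf_cong) (auto simp: indicator_def)
      also have "\<dots> = ennreal (f \<rho>)" by (rule suminf_cmult_indicator[OF disj i])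
      finally show ?thesis using \<open>\<rho> \<in> {0<..1}\<close> by simp
    next
      case False then show ?thesis by (simp add: indicator_def)
    qed
  qed
  finally have le: "(\<Sum>k. ennreal (\<omega> ((1/2)^Suc k))) \<le> 2 * (\<integral>\<^sup>+\<rho>. ennreal (indicator {0<..1} \<rho> * f \<rho>) \<partial>lborel)"
    by (simp add: mult_left_mono)
  have "2 * (\<integral>\<^sup>+\<rho>. ennreal (indicator {0<..1} \<rho> * f \<rho>) \<partial>lborel) < \<infinity>"
    using fin by (simp add: ennreal_mult_less_top)
  with le show ?thesis by (rule order.strict_trans1)
qed

lemma dini_radial:
  fixes x :: "'a::euclidean_space"
  assumes "dini_modulus \<omega>"
  shows "integrable lebesgue (\<lambda>y. indicator (cball x (1/2)) y * (\<omega> (norm (y - x)) / norm (y - x) ^ DIM('a)))"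
proof -
  have w0: "\<omega> 0 = 0" and nn: "\<And>t. t \<ge> 0 \<Longrightarrow> 0 \<le> \<omega> t" and mo: "mono_on {0..} \<omega>"
    using assms unfolding dini_modulus_def by auto
  define N where "N = DIM('a)"
  define F where "F y = indicator (cball x (1/2)) y * (\<omega> (norm (y - x)) / norm (y - x) ^ N)" for y
  define w' where "w' t = \<omega> (max 0 t)" for t
  have "mono w'" unfolding w'_def by (intro monoI mono_onD[OF mo]) auto
  then have [measurable]: "w' \<in> borel_measurable borel" by (rule borel_measurable_mono)
  have F': "F = (\<lambda>y. indicator (cball x (1/2)) y * (w' (norm (y - x)) / norm (y - x) ^ N))"
    by (auto simp: F_def w'_def fun_eq_iff)
  have nm[measurable]: "(\<lambda>y. norm (y - x)) \<in> borel_measurable lborel"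
    by measurable
  have [measurable]: "(\<lambda>y. w' (norm (y - x))) \<in> borel_measurable lborel"
    by (rule measurable_compose[OF nm]) simp
  have [measurable]: "cball x (1/2) \<in> sets lborel" by simp
  have Fm: "F \<in> borel_measurable lborel" unfolding F' by measurable
  have Fnn: "0 \<le> F y" for y unfolding F_def using nn by (auto simp: indicator_def)
  define A where "A k = cball x ((1/2)^Suc k) - cball x ((1/2)^Suc (Suc k))" for k
  define c where "c k = \<omega> ((1/2)^Suc k) / ((1/2)^Suc (Suc k))^N" for k
  have cnn: "0 \<le> c k" for k using nn by (simp add: c_def)
  have Ameas[measurable]: "A k \<in> sets lborel" for k by (simp add: A_def)
  have disj: "disjoint_family A"
    unfolding disjoint_family_on_def
  proof (intro ballI impI)
    fix i j :: nat assume "i \<noteq> j"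
    { fix i j :: nat assume "i < j"
      then have "(1/2::real)^Suc j \<le> (1/2)^Suc (Suc i)" by (intro power_decreasing) auto
      then have "A i \<inter> A j = {}" by (auto simp: A_def) }
    from this[of i j] this[of j i] \<open>i \<noteq> j\<close> show "A i \<inter> A j = {}"
      by (metis inf_commute nat_neq_iff)
  qed
  have pt: "ennreal (F y) \<le> (\<Sum>k. ennreal (c k) * indicator (A k) y)" for y
  proof (cases "\<exists>i. y \<in> A i")
    case True
    then obtain i where i: "y \<in> A i" by auto
    let ?r = "norm (y - x)"
    have r: "(1/2)^Suc (Suc i) < ?r" "?r \<le> (1/2)^Suc i"
      using i by (auto simp: A_def dist_norm norm_minus_commute)
    have rp: "0 < (1/2::real)^Suc (Suc i)" by simp
    have "(1/2::real)^Suc i \<le> 1/2" by (simp add: power_le_one)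
    then have "y \<in> cball x (1/2)" using r by (simp add: dist_norm norm_minus_commute)
    have "\<omega> ?r \<le> \<omega> ((1/2)^Suc i)" using r by (intro mono_onD[OF mo]) auto
    moreover have "((1/2)^Suc (Suc i))^N \<le> ?r^N" using r rp by (intro power_mono) auto
    ultimately have "\<omega> ?r / ?r^N \<le> c i" unfolding c_def
      using nn[of ?r] rp by (intro frac_le) auto
    then have "F y \<le> c i" using \<open>y \<in> cball x (1/2)\<close> by (simp add: F_def)
    then show ?thesis by (simp add: suminf_cmult_indicator[OF disj i] ennreal_leI)
  next
    case False
    have "F y = 0"
    proof (rule ccontr)
      assume "F y \<noteq> 0"
      then have yc: "y \<in> cball x (1/2)" and yx: "y \<noteq> x"
        by (auto simp: F_def w0 indicator_def)
      let ?r = "norm (y - x)"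
      have rp: "0 < ?r" "?r \<le> 1/2" using yc yx by (auto simp: dist_norm norm_minus_commute)
      obtain n where n: "(1/2::real)^n < ?r" using real_arch_pow_inv[OF rp(1), of "1/2"] by auto
      define m where "m = (LEAST n. (1/2::real)^n < ?r)"
      have m1: "(1/2::real)^m < ?r" unfolding m_def by (rule LeastI[of _ n]) (rule n)
      have m2: "\<not> (1/2::real)^k < ?r" if "k < m" for k
        using not_less_Least[OF that[unfolded m_def]] by simp
      have "m \<noteq> 0"
      proof
        assume "m = 0" with m1 rp show False by simp
      qed
      moreover have "m \<noteq> 1"
      proof
        assume "m = 1" with m1 rp show False by simp
      qed
      ultimately obtain i where "m = Suc (Suc i)" by (metis One_nat_def not0_implies_Suc)
      then have "y \<in> A i" using m1 m2[of "Suc i"]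
        by (auto simp: A_def dist_norm norm_minus_commute)
      then show False using False by auto
    qed
    then show ?thesis by simp
  qed
  have "(\<integral>\<^sup>+y. ennreal (F y) \<partial>lborel) \<le> (\<integral>\<^sup>+y. (\<Sum>k. ennreal (c k) * indicator (A k) y) \<partial>lborel)"
    by (intro nn_integral_mono pt)
  also have "\<dots> = (\<Sum>k. \<integral>\<^sup>+y. ennreal (c k) * indicator (A k) y \<partial>lborel)"
    by (rule nn_integral_suminf) measurable
  also have "\<dots> = (\<Sum>k. ennreal (c k) * emeasure lborel (A k))"
    by (intro suminf_cong nn_integral_cmult_indicator Ameas)
  also have "\<dots> \<le> (\<Sum>k. ennreal (unit_ball_vol N * 2^N) * ennreal (\<omega> ((1/2)^Suc k)))"
  proof (intro suminf_le allI)
    fix k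
    have "emeasure lborel (A k) \<le> emeasure lborel (cball x ((1/2)^Suc k))"
      by (rule emeasure_mono) (auto simp: A_def)
    also have "\<dots> = ennreal (unit_ball_vol N * ((1/2)^Suc k)^N)"
      unfolding N_def by (rule emeasure_cball) simp
    finally have "ennreal (c k) * emeasure lborel (A k) \<le> ennreal (c k) * ennreal (unit_ball_vol N * ((1/2)^Suc k)^N)"
      by (rule mult_left_mono) simp
    also have "\<dots> = ennreal (c k * (unit_ball_vol N * ((1/2)^Suc k)^N))"
      using cnn[of k] by (simp add: ennreal_mult)
    also have "c k * (unit_ball_vol N * ((1/2)^Suc k)^N) = unit_ball_vol N * 2^N * \<omega> ((1/2)^Suc k)"
    proof -
      have "((1/2::real)^Suc (Suc k))^N = ((1/2)^Suc k)^N * (1/2)^N"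
        by (simp add: power_mult_distrib[symmetric])
      then show ?thesis unfolding c_def by (simp add: field_simps power_one_over)
    qed
    also have "ennreal \<dots> = ennreal (unit_ball_vol N * 2^N) * ennreal (\<omega> ((1/2)^Suc k))"
      using nn[of "(1/2)^Suc k"] by (simp add: ennreal_mult N_def)
    finally show "ennreal (c k) * emeasure lborel (A k) \<le> ennreal (unit_ball_vol N * 2^N) * ennreal (\<omega> ((1/2)^Suc k))" .
  qed auto
  also have "\<dots> = ennreal (unit_ball_vol N * 2^N) * (\<Sum>k. ennreal (\<omega> ((1/2)^Suc k)))"
    by simp
  also have "\<dots> < \<infinity>" using dini_sum[OF assms] by (simp add: ennreal_mult_less_top)
  finally have "(\<integral>\<^sup>+y. ennreal (F y) \<partial>lborel) < \<infinity>" .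
  then have "integrable lborel F" using Fm Fnn by (intro integrableI_nonneg) auto
  then have "integrable lebesgue F" using Fm by (subst integrable_completion) auto
  then show ?thesis unfolding F_def N_def .
qed

theorem lemma4p1:
  fixes \<Omega> :: "'a::euclidean_space set"
    and K :: "'a \<Rightarrow> 'a \<Rightarrow> real"
    and u :: "'a \<Rightarrow> real"
    and lam Lam :: real
  assumes "open \<Omega>" and "bounded \<Omega>"
    and "(\<lambda>p. indicator (\<Omega> \<times> ball 0 1) p * K (fst p) (snd p)) \<in> borel_measurable lebesgue"
    and "\<And>x. x \<in> \<Omega> \<Longrightarrow> K x \<in> borel_measurable lebesgue"
    and "0 < lam" and "lam \<le> Lam"
    and "\<And>x z. x \<in> \<Omega> \<Longrightarrow> z \<in> ball 0 1 \<Longrightarrow> lam \<le> K x z \<and> K x z \<le> Lam"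
    and "set_integrable lebesgue (unit_nbhd \<Omega>) u"
    and "C_Dini_loc \<Omega> u"
    and "continuous_on (closure \<Omega>) u"
    and "\<And>x. x \<in> \<Omega> \<Longrightarrow> L_K K u x \<le> 0"
    and "\<And>x. x \<notin> \<Omega> \<Longrightarrow> u x \<le> 0"
  shows "\<forall>x\<in>\<Omega>. u x \<le> 0"
proof (rule ccontr)
  note opn = assms(1) and bdd = assms(2) and Kmeas = assms(4) and lam = assms(5) and lamLam = assms(6)
    and Kb = assms(7) and uint = assms(8) and dini = assms(9) and ucont = assms(10)
    and LK = assms(11) and out = assms(12)
  define N where "N = DIM('a)"
  assume "\<not> (\<forall>x\<in>\<Omega>. u x \<le> 0)"
  then obtain x0 where x0: "x0 \<in> \<Omega>" "u x0 > 0" by force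
  have cc: "compact (closure \<Omega>)" using bdd by (simp add: compact_closure)
  obtain xm where xm: "xm \<in> closure \<Omega>" "\<And>y. y \<in> closure \<Omega> \<Longrightarrow> u y \<le> u xm"
  proof -
    have "closure \<Omega> \<noteq> {}" using x0 closure_subset by blast
    then show ?thesis using continuous_attains_sup[OF cc _ ucont] that by blast
  qed
  define M where "M = u xm"
  have Mpos: "M > 0" using xm(2)[of x0] x0 closure_subset unfolding M_def by force
  have umax: "u y \<le> M" for y
  proof (cases "y \<in> \<Omega>")
    case True then show ?thesis using xm(2)[of y] closure_subset unfolding M_def by blast
  next
    case False then show ?thesis using out[of y] Mpos by simp
  qed
  define S where "S = {y \<in> closure \<Omega>. u y = M}"
  have "closed S" unfolding S_def by (rule continuous_closed_preimage_constant[OF ucont]) simp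
  then have Sc: "compact S" using cc unfolding S_def
    by (metis (no_types, lifting) S_def compact_Int_closed inf.absorb2 mem_Collect_eq subsetI)
  have Sne: "S \<noteq> {}" using xm unfolding S_def M_def by blast
  obtain e :: 'a where e: "e \<in> Basis" using nonempty_Basis by blast
  have "continuous_on S (\<lambda>y. y \<bullet> e)" by (intro continuous_intros)
  then obtain x1 where x1S: "x1 \<in> S" and x1max: "\<And>y. y \<in> S \<Longrightarrow> y \<bullet> e \<le> x1 \<bullet> e"
    using continuous_attains_sup[OF Sc Sne] by blast
  have ux1: "u x1 = M" using x1S by (simp add: S_def)
  have x1: "x1 \<in> \<Omega>"
  proof (rule ccontr)
    assume "x1 \<notin> \<Omega>" then have "u x1 \<le> 0" by (rule out)
    then show False using ux1 Mpos by simp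
  qed
  define g where "g y = (u x1 - u y) / norm (y - x1) ^ N * K x1 (y - x1)" for y
  define B where "B = ball x1 (1::real)"
  have Bsets[measurable]: "B \<in> sets lebesgue" by (simp add: B_def)
  have Kin: "lam \<le> K x1 (y - x1) \<and> K x1 (y - x1) \<le> Lam" if "y \<in> B" for y
    using Kb[OF x1, of "y - x1"] that by (simp add: B_def dist_norm norm_minus_commute)
  have gnn: "0 \<le> g y" if "y \<in> B" for y
    using Kin[OF that] lam umax[of y] ux1 unfolding g_def by simp
  have Bsub: "B \<subseteq> unit_nbhd \<Omega>" using x1 by (auto simp: B_def unit_nbhd_def)
  have uB: "set_integrable lebesgue B u" by (rule set_integrable_subset[OF uint Bsets Bsub])
  define u1 where "u1 y = indicator B y *\<^sub>R u y" for y
  have u1int: "integrable lebesgue u1" using uB unfolding set_integrable_def u1_def[abs_def] .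
  have u1m[measurable]: "u1 \<in> borel_measurable lebesgue" using u1int by auto
  have trm: "(\<lambda>y. y - x1) \<in> lebesgue \<rightarrow>\<^sub>M lebesgue"
  proof -
    have "(\<lambda>y. - x1 + (\<Sum>j\<in>Basis. (1 * (y \<bullet> j)) *\<^sub>R j)) \<in> lebesgue \<rightarrow>\<^sub>M lebesgue"
      using lebesgue_affine_measurable[of "\<lambda>_. 1" "- x1"] by simp
    moreover have "(\<lambda>y::'a. - x1 + (\<Sum>j\<in>Basis. (1 * (y \<bullet> j)) *\<^sub>R j)) = (\<lambda>y. y - x1)"
      by (simp add: euclidean_representation fun_eq_iff)
    ultimately show ?thesis by simp
  qed
  have Km[measurable]: "(\<lambda>y. K x1 (y - x1)) \<in> borel_measurable lebesgue"
    by (rule measurable_compose[OF trm Kmeas[OF x1]])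
  define kk where "kk y = K x1 (y - x1)" for y
  have kkm[measurable]: "kk \<in> borel_measurable lebesgue" using Km unfolding kk_def[abs_def] .
  define nr where "nr y = norm (y - x1)" for y
  have nrm[measurable]: "nr \<in> borel_measurable lebesgue"
    unfolding nr_def[abs_def] by (rule measurable_completion) measurable
  have geq: "indicator B y *\<^sub>R g y = indicator B y * ((u x1 - u1 y) / nr y ^ N * kk y)" for y
    by (simp add: g_def u1_def indicator_def kk_def nr_def)
  have Gm: "(\<lambda>y. indicator B y *\<^sub>R g y) \<in> borel_measurable lebesgue"
    unfolding geq by measurable
  obtain d0 where d0: "d0 > 0" "cball x1 d0 \<subseteq> \<Omega>" using open_contains_cball opn x1 by blast
  define \<delta> where "\<delta> = min d0 (1/2)"
  have dp: "\<delta> > 0" "\<delta> \<le> 1/2" using d0 by (auto simp: \<delta>_def)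
  have dsub: "cball x1 \<delta> \<subseteq> \<Omega>" using d0 by (auto simp: \<delta>_def)
  obtain \<omega> where dm: "dini_modulus \<omega>"
    and wb: "\<And>a b. a \<in> cball x1 \<delta> \<Longrightarrow> b \<in> cball x1 \<delta> \<Longrightarrow> \<bar>u a - u b\<bar> \<le> \<omega> (dist a b)"
    using dini dsub unfolding C_Dini_loc_def by meson
  have wnn: "t \<ge> 0 \<Longrightarrow> 0 \<le> \<omega> t" for t using dm unfolding dini_modulus_def by auto
  define h1 where "h1 y = indicator (cball x1 (1/2)) y * (\<omega> (norm (y - x1)) / norm (y - x1) ^ DIM('a))" for y
  define h2 where "h2 y = indicator B y *\<^sub>R \<bar>u y\<bar>" for y
  define h3 where "h3 y = indicator B y *\<^sub>R \<bar>u x1\<bar>" for y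
  define H where "H y = Lam * h1 y + (Lam / \<delta>^N) * (h3 y + h2 y)" for y
  have h1i: "integrable lebesgue h1" unfolding h1_def[abs_def] by (rule dini_radial[OF dm])
  have h2i: "integrable lebesgue h2" using set_integrable_abs[OF uB] unfolding set_integrable_def h2_def[abs_def] .
  have "emeasure lebesgue B < \<infinity>" using emeasure_lborel_ball_finite[of x1 1] by (simp add: B_def)
  then have h3i: "integrable lebesgue h3" unfolding h3_def[abs_def] by (intro integrable_indicator) auto
  have Hi: "integrable lebesgue H" unfolding H_def[abs_def]
    using h1i h2i h3i by (intro Bochner_Integration.integrable_add integrable_mult_right) auto
  have bound: "norm (indicator B y *\<^sub>R g y) \<le> norm (H y)" for y
  proof (cases "y \<in> B")
    case False
    have "0 \<le> h1 y" "0 \<le> h2 y" "0 \<le> h3 y" using wnn by (auto simp: h1_def h2_def h3_def indicator_def)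
    then have "0 \<le> H y" unfolding H_def using lam lamLam dp by (intro add_nonneg_nonneg mult_nonneg_nonneg) auto
    with False show ?thesis by simp
  next
    case True
    have h1nn: "0 \<le> h1 y" "0 \<le> h2 y" "0 \<le> h3 y" using wnn by (auto simp: h1_def h2_def h3_def indicator_def)
    let ?r = "norm (y - x1)"
    have Lpos: "0 < Lam" using lam lamLam by simp
    have c1: "0 \<le> Lam * h1 y" "0 \<le> (Lam / \<delta>^N) * (h3 y + h2 y)" using h1nn Lpos dp by auto
    have gabs: "\<bar>g y\<bar> = \<bar>u x1 - u y\<bar> / ?r ^ N * K x1 (y - x1)"
      using Kin[OF True] lam unfolding g_def by (simp add: abs_mult abs_divide)
    have gle: "\<bar>g y\<bar> \<le> \<bar>u x1 - u y\<bar> / ?r ^ N * Lam"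
      unfolding gabs using Kin[OF True] by (intro mult_left_mono) auto
    have "\<bar>g y\<bar> \<le> H y"
    proof (cases "?r \<le> \<delta>")
      case True2: True
      have yc: "y \<in> cball x1 \<delta>" using True2 by (simp add: dist_norm norm_minus_commute)
      have "\<bar>u x1 - u y\<bar> \<le> \<omega> ?r" using wb[OF _ yc, of x1] dp by (simp add: dist_norm norm_minus_commute)
      then have "\<bar>u x1 - u y\<bar> / ?r ^ N * Lam \<le> \<omega> ?r / ?r ^ N * Lam"
        using Lpos by (intro mult_right_mono divide_right_mono) auto
      also have "\<dots> = Lam * h1 y" using True2 dp by (simp add: h1_def N_def dist_norm norm_minus_commute)
      finally show ?thesis using gle c1 unfolding H_def by linarith
    next
      case False2: False
      have rpos: "0 < ?r" using False2 dp by linarith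
      have "\<bar>u x1 - u y\<bar> / ?r ^ N \<le> (\<bar>u x1\<bar> + \<bar>u y\<bar>) / \<delta> ^ N"
        using False2 dp by (intro frac_le power_mono) auto
      then have "\<bar>u x1 - u y\<bar> / ?r ^ N * Lam \<le> (\<bar>u x1\<bar> + \<bar>u y\<bar>) / \<delta> ^ N * Lam"
        using Lpos by (intro mult_right_mono) auto
      also have "\<dots> = (Lam / \<delta>^N) * (h3 y + h2 y)" using True by (simp add: h2_def h3_def)
      finally show ?thesis using gle c1 unfolding H_def by linarith
    qed
    then show ?thesis using True by simp
  qed
  have Gi: "integrable lebesgue (\<lambda>y. indicator B y *\<^sub>R g y)"
    by (rule Bochner_Integration.integrable_bound[OF Hi Gm]) (use bound in auto)
  have "L_K K u x1 = (\<integral>y. indicator B y *\<^sub>R g y \<partial>lebesgue)"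
    unfolding L_K_def set_lebesgue_integral_def g_def B_def N_def by simp
  then have "(\<integral>y. indicator B y *\<^sub>R g y \<partial>lebesgue) \<le> 0" using LK[OF x1] by simp
  moreover have "0 \<le> (\<integral>y. indicator B y *\<^sub>R g y \<partial>lebesgue)"
    using gnn by (intro Bochner_Integration.integral_nonneg) (simp add: indicator_def)
  ultimately have "(\<integral>y. indicator B y *\<^sub>R g y \<partial>lebesgue) = 0" by simp
  then have AE0: "AE y in lebesgue. indicator B y *\<^sub>R g y = 0"
    using integral_nonneg_eq_0_iff_AE[OF Gi] gnn by (simp add: indicator_def)
  have AEM: "AE y in lebesgue. y \<in> B \<longrightarrow> u y = M"
  proof (rule AE_mp[OF AE0], intro AE_I2 impI)
    fix y assume g0: "indicator B y *\<^sub>R g y = 0" and yB: "y \<in> B"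
    show "u y = M"
    proof (cases "y = x1")
      case True then show ?thesis using ux1 by simp
    next
      case False
      then have "norm (y - x1) ^ N > 0" by simp
      moreover have "K x1 (y - x1) > 0" using Kin[OF yB] lam by simp
      moreover have "g y = 0" using g0 yB by simp
      ultimately show ?thesis unfolding g_def using ux1 False by auto
    qed
  qed
  define B' where "B' = ball (x1 + (1/2) *\<^sub>R e) (1/2)"
  have eN: "norm e = 1" using e by simp
  have B'B: "B' \<subseteq> B"
  proof
    fix y assume "y \<in> B'"
    then have "norm (y - x1 - (1/2) *\<^sub>R e) < 1/2" by (simp add: B'_def dist_norm norm_minus_commute algebra_simps)
    moreover have "norm (y - x1) \<le> norm (y - x1 - (1/2) *\<^sub>R e) + norm ((1/2) *\<^sub>R e)"
      by (metis diff_add_cancel norm_triangle_ineq)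
    ultimately show "y \<in> B" using eN by (simp add: B_def dist_norm norm_minus_commute)
  qed
  have B'ne: "y \<in> B' \<Longrightarrow> u y \<noteq> M" for y
  proof
    assume yB': "y \<in> B'" and uy: "u y = M"
    have "\<bar>(y - x1 - (1/2) *\<^sub>R e) \<bullet> e\<bar> \<le> norm (y - x1 - (1/2) *\<^sub>R e)"
      using Basis_le_norm[OF e] by simp
    moreover have "norm (y - x1 - (1/2) *\<^sub>R e) < 1/2" using yB'
      by (simp add: B'_def dist_norm norm_minus_commute algebra_simps)
    ultimately have "y \<bullet> e > x1 \<bullet> e" using e by (simp add: inner_diff_left algebra_simps)
    moreover have "y \<in> \<Omega>"
    proof (rule ccontr)
      assume "y \<notin> \<Omega>" then have "u y \<le> 0" by (rule out)
      then show False using uy Mpos by simp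
    qed
    then have "y \<in> S" using uy closure_subset by (auto simp: S_def)
    ultimately show False using x1max[of y] by simp
  qed
  have "AE y in lebesgue. y \<notin> B'" using AEM
    by eventually_elim (use B'B B'ne in blast)
  then have "B' \<in> null_sets lebesgue" by (subst AE_iff_null_sets) (auto simp: B'_def)
  then have "emeasure lebesgue B' = 0" by auto
  moreover have "emeasure lebesgue B' = ennreal (unit_ball_vol (DIM('a)) * (1/2) ^ DIM('a))"
    unfolding B'_def by (simp add: emeasure_ball)
  moreover have "unit_ball_vol (DIM('a)) * (1/2::real) ^ DIM('a) > 0" by simp
  ultimately show False by simp
qed

end
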